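(* Let $d,d'\ge1$, $t_f>0$, $F:\mathbb{R}^d\to\mathbb{R}^d$ be $C^2$, $A:\mathbb{R}^d\to\mathcal{S}^{d'}_{++}$ be $C^3$ with $A(r)\succeq C^{-1}I$ for all $r$, $b:\mathbb{R}^d\to\mathbb{R}^{d'}$ be $C^3$, and $Q(r,x)=\tfrac12x^\top A(r)x-b(r)^\top x$. For $\varepsilon>0$ let $(r_\varepsilon,x_\varepsilon)$ solve the XLMD system $$\ddot r_\varepsilon=F(r_\varepsilon)-\frac{\partial Q}{\partial r}(r_\varepsilon,x_\varepsilon),\qquad \varepsilon\ddot x_\varepsilon=b(r_\varepsilon)-A(r_\varepsilon)x_\varepsilon$$ on $[0,t_f]$, with $r_\varepsilon,x_\varepsilon$ of class $C^3$ and $|r_\varepsilon|,|\dot r_\varepsilon|,|\ddot r_\varepsilon|,|x_\varepsilon|,\sqrt\varepsilon|\dot x_\varepsilon|\le C$ on $[0,t_f]$ with $C$ independent of $\varepsilon$, and with compatible initial condition $x_\varepsilon(0)=A(r_\varepsilon(0))^{-1}b(r_\varepsilon(0))$, $\dot x_\varepsilon(0)$ bounded uniformly in $\varepsilon$ (and $r_\varepsilon(0),\dot r_\varepsilon(0)$ bounded uniformly in $\varepsilon$). Define $y_\varepsilon:=x_\varepsilon-A(r_\varepsilon)^{-1}b(r_\varepsilon)$, which solves $\varepsilon\ddot y_\varepsilon=-A(r_\varepsilon)y_\varepsilon+\varepsilon\psi_\varepsilon$ with $\psi_\varepsilon=-\frac{d^2}{dt^2}[A(r_\varepsilon)^{-1}b(r_\varepsilon)]$,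 $y_\varepsilon(0)=0$. Then $|y_\varepsilon(t)|\le C\varepsilon^{1/2}$ and $|\dot y_\varepsilon(t)|\le C$ for all $t\in[0,t_f]$, with $C$ independent of $\varepsilon$.
   Context: $\mathcal{S}^{d'}_{++}$ is the set of real symmetric positive definite $d'\times d'$ matrices; $\frac{\partial Q}{\partial r}$ is the gradient of $Q$ in $r$. Constants may depend on $t_f$ and the data but not on $\varepsilon$. *)

theory Defs
  imports "HOL-Analysis.Analysis"
begin

text \<open>k-times continuously (Frechet) differentiable on the whole space.
  C^0 = continuous; C^(k+1) = differentiable everywhere and every
  directional derivative x \<mapsto> Df(x)v is C^k (on a finite-dimensional
  domain this is exactly C^(k+1)).\<close>
primrec Ck :: "nat \<Rightarrow> ('a::euclidean_space \<Rightarrow> 'b::real_normed_vector) \<Rightarrow> bool" where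
  "Ck 0 f = continuous_on UNIV f"
| "Ck (Suc k) f = (f differentiable_on UNIV \<and>
      (\<forall>v. Ck k (\<lambda>x. frechet_derivative f (at x) v)))"

text \<open>Q(r,x) = 1/2 x^T A(r) x - b(r)^T x\<close>
definition Qfun :: "(real^'d \<Rightarrow> real^'m^'m) \<Rightarrow> (real^'d \<Rightarrow> real^'m)
    \<Rightarrow> real^'d \<Rightarrow> real^'m \<Rightarrow> real" where
  "Qfun A b r x = (1/2) * (x \<bullet> (A r *v x)) - b r \<bullet> x"

text \<open>Gradient of Q in r.\<close>
definition gradQ_r :: "(real^'d \<Rightarrow> real^'m^'m) \<Rightarrow> (real^'d \<Rightarrow> real^'m)
    \<Rightarrow> real^'d \<Rightarrow> real^'m \<Rightarrow> real^'d" where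
  "gradQ_r A b r x = (\<chi> i. frechet_derivative (\<lambda>\<rho>. Qfun A b \<rho> x) (at r) (axis i 1))"

end

theory Submission
  imports Defs
begin

lemma Ck_Suc_mono: "Ck (Suc k) f \<Longrightarrow> Ck k f"
proof (induction k arbitrary: f)
  case 0
  then show ?case by (simp add: differentiable_imp_continuous_on)
next
  case (Suc k)
  have h: "f differentiable_on UNIV \<and> (\<forall>v. Ck (Suc k) (\<lambda>x. frechet_derivative f (at x) v))"
    using Suc.prems by (subst (asm) Ck.simps(2))
  show ?case
    by (subst Ck.simps(2)) (use h Suc.IH in blast)
qed

definition fd :: "('a::real_normed_vector \<Rightarrow> 'b::real_normed_vector) \<Rightarrow> 'a \<Rightarrow> 'a \<Rightarrow> 'b" where
  "fd f \<rho> v = frechet_derivative f (at \<rho>) v"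

lemma Ck2_unfold:
  assumes "Ck 2 f"
  shows "\<And>\<rho>. f differentiable (at \<rho>)"
    and "\<And>v \<rho>. (\<lambda>\<rho>. fd f \<rho> v) differentiable (at \<rho>)"
    and "\<And>v w. continuous_on UNIV (\<lambda>\<rho>. fd (\<lambda>\<rho>. fd f \<rho> v) \<rho> w)"
  using assms by (auto simp: numeral_2_eq_2 fd_def differentiable_on_def)

lemma lin_exp:
  fixes v :: "real^'d"
  assumes "linear L"
  shows "L v = (\<Sum>i\<in>UNIV. (v$i) *\<^sub>R L (axis i 1))"
proof -
  have "v = (\<Sum>i\<in>UNIV. (v$i) *\<^sub>R axis i 1)"
    using basis_expansion[of v] by (simp add: scalar_mult_eq_scaleR)
  then have "L v = L (\<Sum>i\<in>UNIV. (v$i) *\<^sub>R axis i 1)" by simp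
  also have "\<dots> = (\<Sum>i\<in>UNIV. (v$i) *\<^sub>R L (axis i 1))"
    using assms by (simp add: linear_sum linear_scale)
  finally show ?thesis .
qed

lemma mv_norm:
  fixes M :: "real^'n^'m"
  shows "norm (M *v v) \<le> real CARD('m) * real CARD('n) * norm M * norm v"
proof -
  have "\<bar>M$i$j\<bar> \<le> norm M" for i j
  proof -
    have "\<bar>M$i$j\<bar> \<le> norm (M$i)" by (rule component_le_norm_cart)
    also have "norm (M$i) \<le> norm M" by (rule Finite_Cartesian_Product.norm_nth_le)
    finally show ?thesis .
  qed
  then have "onorm ((*v) M) \<le> real CARD('m) * real CARD('n) * norm M"
    by (rule onorm_le_matrix_component)
  moreover have "norm (M *v v) \<le> onorm ((*v) M) * norm v"
    by (rule onorm) simp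
  moreover have "onorm ((*v) M) * norm v \<le> real CARD('m) * real CARD('n) * norm M * norm v"
    using \<open>onorm ((*v) M) \<le> real CARD('m) * real CARD('n) * norm M\<close>
    by (rule mult_right_mono) simp
  ultimately show ?thesis by linarith
qed

lemma mv_norm2:
  fixes M :: "real^'n^'m"
  shows "norm (M *v v) \<le> norm M * norm v * (real CARD('m) * real CARD('n))"
proof -
  have "norm (M *v v) \<le> real CARD('m) * real CARD('n) * norm M * norm v" by (rule mv_norm)
  also have "\<dots> = norm M * norm v * (real CARD('m) * real CARD('n))" by (simp add: algebra_simps)
  finally show ?thesis .
qed

lemma bb_mv: "bounded_bilinear (\<lambda>(M::real^'n^'m) v. M *v v)"
proof (rule bounded_bilinear.intro, goal_cases)
  case (1 a a' b)
  show ?case by (rule matrix_vector_mult_add_rdistrib)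
next
  case (2 a b b')
  show ?case by (rule matrix_vector_right_distrib)
next
  case (3 r a b)
  show ?case by (simp add: vec_eq_iff matrix_vector_mult_def sum_distrib_left mult.assoc)
next
  case (4 a r b)
  show ?case by (simp add: vec_eq_iff matrix_vector_mult_def sum_distrib_left mult.left_commute)
next
  case 5
  show ?case apply (rule exI[of _ "real CARD('m) * real CARD('n)"]) apply (intro allI) apply (rule mv_norm2) done
qed

lemma inv_props:
  fixes M :: "real^'m^'m"
  assumes c: "c > 0" and coer: "\<And>v. v \<bullet> (M *v v) \<ge> c * norm v ^ 2"
  shows "M ** matrix_inv M = mat 1" "matrix_inv M ** M = mat 1"
    and "\<And>u. c * norm u \<le> norm (M *v u)"
    and "\<And>w. norm (matrix_inv M *v w) \<le> norm w / c"
proof -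
  have lb: "c * norm u \<le> norm (M *v u)" for u
  proof (cases "u = 0")
    case True then show ?thesis by simp
  next
    case False
    have "c * norm u ^ 2 \<le> u \<bullet> (M *v u)" by (rule coer)
    also have "\<dots> \<le> norm u * norm (M *v u)" by (rule norm_cauchy_schwarz)
    finally have "norm u * (c * norm u) \<le> norm u * norm (M *v u)"
      by (simp add: power2_eq_square algebra_simps)
    then show ?thesis using False by simp
  qed
  then show "\<And>u. c * norm u \<le> norm (M *v u)" .
  have "\<forall>x. M *v x = 0 \<longrightarrow> x = 0"
  proof (intro allI impI)
    fix x assume "M *v x = 0"
    then have "c * norm x \<le> 0" using lb[of x] by simp
    then have "norm x \<le> 0" using c by (simp add: mult_le_0_iff)
    then show "x = 0" by simp
  qed
  then have "invertible M"
    using matrix_left_invertible_ker invertible_left_inverse by blast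
  then have inv: "M ** matrix_inv M = mat 1 \<and> matrix_inv M ** M = mat 1"
    unfolding invertible_def matrix_inv_def by (rule someI_ex)
  then show "M ** matrix_inv M = mat 1" "matrix_inv M ** M = mat 1" by auto
  fix w
  have "M *v (matrix_inv M *v w) = w"
    using inv by (simp add: matrix_vector_mul_assoc)
  then show "norm (matrix_inv M *v w) \<le> norm w / c"
    using lb[of "matrix_inv M *v w"] c by (simp add: field_simps)
qed

lemma sym_inner:
  fixes M :: "real^'m^'m"
  assumes "transpose M = M"
  shows "y \<bullet> (M *v z) = (M *v y) \<bullet> z"
proof -
  have "y \<bullet> (M *v z) = (y v* M) \<bullet> z" by (rule dot_lmul_matrix[symmetric])
  moreover have "y v* M = M *v y" using transpose_matrix_vector[of M y] assms by simp
  ultimately show ?thesis by simp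
qed

lemma fd_has_derivative: "f differentiable (at \<rho>) \<Longrightarrow> (f has_derivative fd f \<rho>) (at \<rho>)"
  unfolding fd_def[abs_def] using frechet_derivative_works by (metis eta_contract_eq)

lemma fd_linear: "f differentiable (at \<rho>) \<Longrightarrow> linear (fd f \<rho>)"
  using fd_has_derivative has_derivative_linear by blast

lemma fd_chain:
  assumes "f differentiable (at (r t))" "(r has_vector_derivative r1) (at t within S)"
  shows "((\<lambda>s. f (r s)) has_vector_derivative fd f (r t) r1) (at t within S)"
proof -
  have "((\<lambda>s. f (r s)) has_derivative (\<lambda>x. fd f (r t) (x *\<^sub>R r1))) (at t within S)"
    using has_derivative_compose[OF assms(2)[unfolded has_vector_derivative_def] fd_has_derivative[OF assms(1)]] .
  moreover have "(\<lambda>x. fd f (r t) (x *\<^sub>R r1)) = (\<lambda>x. x *\<^sub>R fd f (r t) r1)"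
    using fd_linear[OF assms(1)] by (simp add: linear_scale)
  ultimately show ?thesis by (simp add: has_vector_derivative_def)
qed

definition cd1 :: "(real^'d \<Rightarrow> 'b::real_normed_vector) \<Rightarrow> (real \<Rightarrow> real^'d) \<Rightarrow> (real \<Rightarrow> real^'d) \<Rightarrow> real \<Rightarrow> 'b" where
  "cd1 f r r1 t = fd f (r t) (r1 t)"

definition cd2 :: "(real^'d \<Rightarrow> 'b::real_normed_vector) \<Rightarrow> (real \<Rightarrow> real^'d) \<Rightarrow> (real \<Rightarrow> real^'d) \<Rightarrow> (real \<Rightarrow> real^'d) \<Rightarrow> real \<Rightarrow> 'b" where
  "cd2 f r r1 r2 t = (\<Sum>i\<in>UNIV. (r1 t $ i) *\<^sub>R fd (\<lambda>\<rho>. fd f \<rho> (axis i 1)) (r t) (r1 t) + (r2 t $ i) *\<^sub>R fd f (r t) (axis i 1))"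

lemma curve2:
  fixes f :: "real^'d \<Rightarrow> 'b::real_normed_vector" and C :: real
  assumes f2: "Ck 2 f" and Cpos: "C > 0"
  obtains K where "K > 0" and
   "\<And>r r1 r2 S t. (\<And>s. s \<in> S \<Longrightarrow> (r has_vector_derivative r1 s) (at s within S)) \<Longrightarrow>
      (\<And>s. s \<in> S \<Longrightarrow> (r1 has_vector_derivative r2 s) (at s within S)) \<Longrightarrow>
      (\<And>s. s \<in> S \<Longrightarrow> norm (r s) \<le> C \<and> norm (r1 s) \<le> C \<and> norm (r2 s) \<le> C) \<Longrightarrow> t \<in> S \<Longrightarrow>
     ((\<lambda>s. f (r s)) has_vector_derivative cd1 f r r1 t) (at t within S) \<and>
     (cd1 f r r1 has_vector_derivative cd2 f r r1 r2 t) (at t within S) \<and>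
     norm (f (r t)) \<le> K \<and> norm (cd1 f r r1 t) \<le> K \<and> norm (cd2 f r r1 r2 t) \<le> K"
proof -
  note fdiff = Ck2_unfold(1)[OF f2]
  note hdiff = Ck2_unfold(2)[OF f2]
  note hhcont = Ck2_unfold(3)[OF f2]
  define h where "h i \<rho> = fd f \<rho> (axis i 1)" for i \<rho>
  define S1 where "S1 \<rho> = (\<Sum>i\<in>UNIV. norm (h i \<rho>))" for \<rho>
  define S2 where "S2 \<rho> = (\<Sum>i\<in>UNIV. \<Sum>j\<in>UNIV. norm (fd (h i) \<rho> (axis j 1)))" for \<rho>
  define P where "P \<rho> = norm (f \<rho>) + S1 \<rho> + S2 \<rho>" for \<rho>
  have fcont: "continuous_on UNIV f"
    using fdiff by (simp add: continuous_at_imp_continuous_on differentiable_imp_continuous_within)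
  have hcont: "continuous_on UNIV (h i)" for i
    using hdiff unfolding h_def by (simp add: continuous_at_imp_continuous_on differentiable_imp_continuous_within)
  have hhc: "continuous_on UNIV (\<lambda>\<rho>. fd (h i) \<rho> (axis j 1))" for i j
    using hhcont unfolding h_def[abs_def] by simp
  have Pcont: "continuous_on UNIV P"
    unfolding P_def[abs_def] S1_def[abs_def] S2_def[abs_def]
    by (intro continuous_intros fcont hcont hhc)
  have "compact (P ` cball 0 C)"
    by (rule compact_continuous_image[OF continuous_on_subset[OF Pcont]]) auto
  then obtain B where B: "\<And>z. z \<in> P ` cball 0 C \<Longrightarrow> norm z \<le> B"
    using compact_imp_bounded bounded_iff by metis
  have S1nn: "S1 \<rho> \<ge> 0" for \<rho> unfolding S1_def by (simp add: sum_nonneg)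
  have S2nn: "S2 \<rho> \<ge> 0" for \<rho> unfolding S2_def by (simp add: sum_nonneg)
  have PB: "norm (f \<rho>) \<le> B \<and> S1 \<rho> \<le> B \<and> S2 \<rho> \<le> B" if "norm \<rho> \<le> C" for \<rho>
  proof -
    have "norm (P \<rho>) \<le> B" using B[of "P \<rho>"] that by auto
    then have "P \<rho> \<le> B" by simp
    then show ?thesis unfolding P_def using S1nn[of \<rho>] S2nn[of \<rho>] norm_ge_zero[of "f \<rho>"]
      by (intro conjI; linarith)
  qed
  have B0: "B \<ge> 0"
  proof -
    have "norm (f 0) \<le> B" using PB[of 0] Cpos by simp
    then show ?thesis using norm_ge_zero[of "f 0"] by linarith
  qed
  define K where "K = (1 + B) * (1 + C)^2"
  have Kexp: "K = 1 + 2*C + C*C + B + 2*(B*C) + B*C*C"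
    unfolding K_def by (simp add: algebra_simps power2_eq_square)
  have nn: "0 \<le> B*C" "0 \<le> B*C*C" "0 \<le> C*C" using B0 Cpos by simp_all
  have Kpos: "K > 0" using Kexp nn Cpos B0 by linarith
  show ?thesis
  proof (rule that[OF Kpos])
    fix r r1 r2 :: "real \<Rightarrow> real^'d" and S t
    assume rd1: "\<And>s. s \<in> S \<Longrightarrow> (r has_vector_derivative r1 s) (at s within S)"
      and rd2: "\<And>s. s \<in> S \<Longrightarrow> (r1 has_vector_derivative r2 s) (at s within S)"
      and rb: "\<And>s. s \<in> S \<Longrightarrow> norm (r s) \<le> C \<and> norm (r1 s) \<le> C \<and> norm (r2 s) \<le> C"
      and tS: "t \<in> S"
    have D1: "((\<lambda>s. f (r s)) has_vector_derivative cd1 f r r1 t) (at t within S)"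
      unfolding cd1_def by (rule fd_chain[OF fdiff rd1[OF tS]])
    have cd1_eq: "cd1 f r r1 = (\<lambda>s. \<Sum>i\<in>UNIV. (r1 s $ i) *\<^sub>R h i (r s))"
    proof (rule ext)
      fix s
      show "cd1 f r r1 s = (\<Sum>i\<in>UNIV. (r1 s $ i) *\<^sub>R h i (r s))"
        unfolding cd1_def h_def by (rule lin_exp[OF fd_linear[OF fdiff]])
    qed
    have comp: "((\<lambda>s. r1 s $ i) has_real_derivative (r2 t $ i)) (at t within S)" for i
      unfolding has_real_derivative_iff_has_vector_derivative
      by (rule bounded_linear.has_vector_derivative[OF bounded_linear_vec_nth rd2[OF tS]])
    have hch: "((\<lambda>s. h i (r s)) has_vector_derivative fd (h i) (r t) (r1 t)) (at t within S)" for i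
      by (rule fd_chain[OF _ rd1[OF tS]]) (unfold h_def[abs_def], rule hdiff)
    have D2: "(cd1 f r r1 has_vector_derivative cd2 f r r1 r2 t) (at t within S)"
      unfolding cd1_eq cd2_def h_def[symmetric]
      by (rule has_vector_derivative_sum, rule has_vector_derivative_scaleR[OF comp hch])
    have rt: "norm (r t) \<le> C" "norm (r1 t) \<le> C" "norm (r2 t) \<le> C" using rb[OF tS] by auto
    have c1: "\<bar>r1 t $ i\<bar> \<le> C" "\<bar>r2 t $ i\<bar> \<le> C" for i
      using component_le_norm_cart[of "r1 t" i] component_le_norm_cart[of "r2 t" i] rt by linarith+
    have N0: "norm (f (r t)) \<le> K" using PB[OF rt(1)] Kexp nn Cpos B0 by linarith
    have "norm (cd1 f r r1 t) \<le> (\<Sum>i\<in>UNIV. norm ((r1 t $ i) *\<^sub>R h i (r t)))"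
      unfolding cd1_eq by (rule norm_sum)
    also have "\<dots> \<le> (\<Sum>i\<in>UNIV. C * norm (h i (r t)))"
      by (rule sum_mono) (simp add: c1 mult_right_mono)
    also have "\<dots> = C * S1 (r t)" unfolding S1_def by (simp add: sum_distrib_left)
    also have "\<dots> \<le> C * B" using PB[OF rt(1)] Cpos by simp
    finally have N1: "norm (cd1 f r r1 t) \<le> K" using Kexp nn Cpos B0 mult.commute[of C B] by linarith
    have inner_b: "norm (fd (h i) (r t) (r1 t)) \<le> C * (\<Sum>j\<in>UNIV. norm (fd (h i) (r t) (axis j 1)))" for i
    proof -
      have "fd (h i) (r t) (r1 t) = (\<Sum>j\<in>UNIV. (r1 t $ j) *\<^sub>R fd (h i) (r t) (axis j 1))"
        by (rule lin_exp[OF fd_linear]) (unfold h_def[abs_def], rule hdiff)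
      then have "norm (fd (h i) (r t) (r1 t)) \<le> (\<Sum>j\<in>UNIV. norm ((r1 t $ j) *\<^sub>R fd (h i) (r t) (axis j 1)))"
        using norm_sum by metis
      also have "\<dots> \<le> (\<Sum>j\<in>UNIV. C * norm (fd (h i) (r t) (axis j 1)))"
        by (rule sum_mono) (simp add: c1 mult_right_mono)
      finally show ?thesis by (simp add: sum_distrib_left)
    qed
    have "norm (cd2 f r r1 r2 t) \<le> (\<Sum>i\<in>UNIV. norm ((r1 t $ i) *\<^sub>R fd (h i) (r t) (r1 t) + (r2 t $ i) *\<^sub>R h i (r t)))"
      unfolding cd2_def h_def[symmetric] by (rule norm_sum)
    also have "\<dots> \<le> (\<Sum>i\<in>UNIV. C * (C * (\<Sum>j\<in>UNIV. norm (fd (h i) (r t) (axis j 1)))) + C * norm (h i (r t)))"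
    proof (rule sum_mono)
      fix i
      have "norm ((r1 t $ i) *\<^sub>R fd (h i) (r t) (r1 t)) \<le> C * (C * (\<Sum>j\<in>UNIV. norm (fd (h i) (r t) (axis j 1))))"
        using mult_mono[OF c1(1) inner_b] Cpos by simp
      moreover have "norm ((r2 t $ i) *\<^sub>R h i (r t)) \<le> C * norm (h i (r t))"
        by (simp add: c1 mult_right_mono)
      ultimately show "norm ((r1 t $ i) *\<^sub>R fd (h i) (r t) (r1 t) + (r2 t $ i) *\<^sub>R h i (r t))
          \<le> C * (C * (\<Sum>j\<in>UNIV. norm (fd (h i) (r t) (axis j 1)))) + C * norm (h i (r t))"
        by (meson add_mono norm_triangle_le)
    qed
    also have "\<dots> = C * C * S2 (r t) + C * S1 (r t)"
      unfolding S1_def S2_def by (simp add: sum.distrib sum_distrib_left mult.assoc)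
    also have "\<dots> \<le> C * C * B + C * B"
      using PB[OF rt(1)] Cpos by (simp add: add_mono)
    finally have N2': "norm (cd2 f r r1 r2 t) \<le> C * C * B + C * B" .
    have "C * C * B = B * C * C" "C * B = B * C" by (simp_all add: algebra_simps)
    then have N2: "norm (cd2 f r r1 r2 t) \<le> K" using N2' Kexp nn Cpos B0 by linarith
    show "((\<lambda>s. f (r s)) has_vector_derivative cd1 f r r1 t) (at t within S) \<and>
     (cd1 f r r1 has_vector_derivative cd2 f r r1 r2 t) (at t within S) \<and>
     norm (f (r t)) \<le> K \<and> norm (cd1 f r r1 t) \<le> K \<and> norm (cd2 f r r1 r2 t) \<le> K"
      using D1 D2 N0 N1 N2 by blast
  qed
qed

lemma mv_scaleR_left: "((k::real) *\<^sub>R (A::real^'n^'m)) *v v = k *\<^sub>R (A *v v)"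
  by (simp add: vec_eq_iff matrix_vector_mult_def sum_distrib_left mult.assoc)

lemma inv_deriv:
  fixes M :: "real \<Rightarrow> real^'m^'m" and chi :: "real \<Rightarrow> real^'m"
  assumes c: "c > 0"
    and coer: "\<And>s v. s \<in> S \<Longrightarrow> v \<bullet> (M s *v v) \<ge> c * norm v ^ 2"
    and tS: "t \<in> S"
    and dM: "(M has_vector_derivative M1) (at t within S)"
    and dchi: "(chi has_vector_derivative chi1) (at t within S)"
  shows "((\<lambda>s. matrix_inv (M s) *v chi s) has_vector_derivative
           matrix_inv (M t) *v (chi1 - M1 *v (matrix_inv (M t) *v chi t))) (at t within S)"
proof -
  define h where "h s = matrix_inv (M s) *v chi s" for s
  define w where "w = matrix_inv (M t) *v (chi1 - M1 *v h t)"
  define \<kappa> where "\<kappa> = real CARD('m) * real CARD('m)"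
  have kpos: "\<kappa> \<ge> 0" unfolding \<kappa>_def by simp
  have mvn: "norm (A *v v) \<le> \<kappa> * norm A * norm v" for A :: "real^'m^'m" and v
    unfolding \<kappa>_def by (rule mv_norm)
  have Mh: "M s *v h s = chi s" if "s \<in> S" for s
  proof -
    have "M s ** matrix_inv (M s) = mat 1" using inv_props(1)[OF c coer[OF that]] .
    then show ?thesis unfolding h_def by (simp add: matrix_vector_mul_assoc)
  qed
  have Mw: "M t *v w = chi1 - M1 *v h t"
  proof -
    have "M t ** matrix_inv (M t) = mat 1" using inv_props(1)[OF c coer[OF tS]] .
    then show ?thesis unfolding w_def by (simp add: matrix_vector_mul_assoc)
  qed
  have lb: "c * norm u \<le> norm (M s *v u)" if "s \<in> S" for s u
    using inv_props(3)[OF c coer[OF that]] .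
  define X where "X = \<kappa> * norm (h t)"
  define Y where "Y = \<kappa> * norm w"
  have X0: "X \<ge> 0" and Y0: "Y \<ge> 0" unfolding X_def Y_def using kpos by simp_all
  have dchi': "\<forall>e>0. eventually (\<lambda>s. norm (chi s - chi t - (s - t) *\<^sub>R chi1) \<le> e * norm (s - t)) (at t within S)"
    using dchi unfolding has_vector_derivative_def has_derivative_within_alt2 by blast
  have dM': "\<forall>e>0. eventually (\<lambda>s. norm (M s - M t - (s - t) *\<^sub>R M1) \<le> e * norm (s - t)) (at t within S)"
    using dM unfolding has_vector_derivative_def has_derivative_within_alt2 by blast
  have Mlim: "(M \<longlongrightarrow> M t) (at t within S)"
    using has_vector_derivative_continuous[OF dM] continuous_within by blast
  have main: "eventually (\<lambda>s. norm (h s - h t - (s - t) *\<^sub>R w) \<le> e * norm (s - t)) (at t within S)"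
    if e: "e > 0" for e
  proof -
    define e1 where "e1 = c * e / 3"
    define e2 where "e2 = c * e / (3 * (X + 1))"
    define \<delta> where "\<delta> = c * e / (3 * (Y + 1))"
    have e1p: "e1 > 0" unfolding e1_def using c e by simp
    have e2p: "e2 > 0" unfolding e2_def using c e X0 by simp
    have dp: "\<delta> > 0" unfolding \<delta>_def using c e Y0 by simp
    have "X + 1 \<noteq> 0" "Y + 1 \<noteq> 0" using X0 Y0 by simp_all
    then have e2X: "e2 * (X + 1) = c * e / 3" and dY: "\<delta> * (Y + 1) = c * e / 3"
      unfolding e2_def \<delta>_def by (simp_all add: field_simps)
    have ev1: "eventually (\<lambda>s. norm (chi s - chi t - (s - t) *\<^sub>R chi1) \<le> e1 * norm (s - t)) (at t within S)"
      using dchi' e1p by blast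
    have ev2: "eventually (\<lambda>s. norm (M s - M t - (s - t) *\<^sub>R M1) \<le> e2 * norm (s - t)) (at t within S)"
      using dM' e2p by blast
    have ev3: "eventually (\<lambda>s. dist (M s) (M t) < \<delta>) (at t within S)"
      using tendstoD[OF Mlim dp] .
    have ev4: "eventually (\<lambda>s. s \<in> S) (at t within S)"
      by (simp add: eventually_at_filter)
    show ?thesis
    proof (rule eventually_mono[OF eventually_conj[OF ev1 eventually_conj[OF ev2 eventually_conj[OF ev3 ev4]]]])
      fix s
      assume H: "norm (chi s - chi t - (s - t) *\<^sub>R chi1) \<le> e1 * norm (s - t) \<and>
        norm (M s - M t - (s - t) *\<^sub>R M1) \<le> e2 * norm (s - t) \<and>
        dist (M s) (M t) < \<delta> \<and> s \<in> S"
      then have sS: "s \<in> S" and a1: "norm (chi s - chi t - (s - t) *\<^sub>R chi1) \<le> e1 * norm (s - t)"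
        and a2: "norm (M s - M t - (s - t) *\<^sub>R M1) \<le> e2 * norm (s - t)"
        and a3: "norm (M s - M t) \<le> \<delta>" by (auto simp: dist_norm)
      define \<Delta> where "\<Delta> = h s - h t - (s - t) *\<^sub>R w"
      have iden: "M s *v \<Delta> = (chi s - chi t - (s - t) *\<^sub>R chi1)
          - ((M s - M t - (s - t) *\<^sub>R M1) *v h t) - (s - t) *\<^sub>R ((M s - M t) *v w)"
      proof -
        have "M s *v \<Delta> = chi s - M s *v h t - (s - t) *\<^sub>R (M s *v w)"
          unfolding \<Delta>_def using Mh[OF sS]
          by (simp add: matrix_vector_mult_diff_distrib matrix_vector_mult_scaleR)
        also have "\<dots> = (chi s - chi t - (s - t) *\<^sub>R chi1)
          - ((M s - M t - (s - t) *\<^sub>R M1) *v h t) - (s - t) *\<^sub>R ((M s - M t) *v w)"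
        proof -
          have chi1_eq: "chi1 = M1 *v h t + M t *v w" using Mw by simp
          show ?thesis using Mh[OF tS]
            by (simp add: chi1_eq matrix_vector_mult_diff_rdistrib mv_scaleR_left algebra_simps)
        qed
        finally show ?thesis .
      qed
      have T2: "norm ((M s - M t - (s - t) *\<^sub>R M1) *v h t) \<le> e2 * norm (s - t) * X"
      proof -
        have "norm ((M s - M t - (s - t) *\<^sub>R M1) *v h t) \<le> \<kappa> * norm (M s - M t - (s - t) *\<^sub>R M1) * norm (h t)"
          by (rule mvn)
        also have "\<dots> \<le> \<kappa> * (e2 * norm (s - t)) * norm (h t)"
          by (intro mult_right_mono mult_left_mono a2 kpos) simp
        also have "\<dots> = e2 * norm (s - t) * X" unfolding X_def by (simp add: algebra_simps)
        finally show ?thesis .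
      qed
      have T3: "norm ((s - t) *\<^sub>R ((M s - M t) *v w)) \<le> \<delta> * norm (s - t) * Y"
      proof -
        have "norm ((s - t) *\<^sub>R ((M s - M t) *v w)) = norm (s - t) * norm ((M s - M t) *v w)" by simp
        also have "\<dots> \<le> norm (s - t) * (\<kappa> * norm (M s - M t) * norm w)"
          by (intro mult_left_mono mvn) simp
        also have "\<dots> \<le> norm (s - t) * (\<kappa> * \<delta> * norm w)"
          by (intro mult_left_mono mult_right_mono a3 kpos) simp_all
        also have "\<dots> = \<delta> * norm (s - t) * Y" unfolding Y_def by (simp add: algebra_simps)
        finally show ?thesis .
      qed
      have "c * norm \<Delta> \<le> norm (M s *v \<Delta>)" by (rule lb[OF sS])
      also have "\<dots> \<le> e1 * norm (s - t) + e2 * norm (s - t) * X + \<delta> * norm (s - t) * Y"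
        unfolding iden using a1 T2 T3 by (smt (verit) norm_triangle_ineq4)
      also have "\<dots> \<le> c * e * norm (s - t)"
      proof -
        have "e2 * X \<le> c * e / 3" using e2X e2p by (simp add: algebra_simps)
        moreover have "\<delta> * Y \<le> c * e / 3" using dY dp by (simp add: algebra_simps)
        ultimately have "e1 + e2 * X + \<delta> * Y \<le> c * e" unfolding e1_def by simp
        then have "(e1 + e2 * X + \<delta> * Y) * norm (s - t) \<le> (c * e) * norm (s - t)"
          by (rule mult_right_mono) simp
        then show ?thesis by (simp add: algebra_simps)
      qed
      finally have "c * norm \<Delta> \<le> c * (e * norm (s - t))" by (simp add: mult.assoc)
      then show "norm (h s - h t - (s - t) *\<^sub>R w) \<le> e * norm (s - t)"
        unfolding \<Delta>_def using c by simp
    qed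
  qed
  have "(h has_derivative (\<lambda>x. x *\<^sub>R w)) (at t within S)"
    unfolding has_derivative_within_alt2 using main by (simp add: bounded_linear_scaleR_left)
  then show ?thesis unfolding has_vector_derivative_def h_def[abs_def] w_def h_def .
qed

lemma energy:
  fixes M M1 :: "real \<Rightarrow> real^'m^'m" and y y1 y2 g2 :: "real \<Rightarrow> real^'m"
  assumes tf: "tf > 0" and eps: "eps > 0" and C: "C > 0" and L0: "L \<ge> 0"
    and dM: "\<And>t. t \<in> {0..tf} \<Longrightarrow> (M has_vector_derivative M1 t) (at t within {0..tf})"
    and dy: "\<And>t. t \<in> {0..tf} \<Longrightarrow> (y has_vector_derivative y1 t) (at t within {0..tf})"
    and dy1: "\<And>t. t \<in> {0..tf} \<Longrightarrow> (y1 has_vector_derivative y2 t) (at t within {0..tf})"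
    and sym: "\<And>t. transpose (M t) = M t"
    and coer: "\<And>t v. v \<bullet> (M t *v v) \<ge> (1 / C) * norm v ^ 2"
    and eq: "\<And>t. t \<in> {0..tf} \<Longrightarrow> eps *\<^sub>R y2 t = - (M t *v y t) - eps *\<^sub>R g2 t"
    and bM1: "\<And>t. t \<in> {0..tf} \<Longrightarrow> norm (M1 t) \<le> L"
    and bg2: "\<And>t. t \<in> {0..tf} \<Longrightarrow> norm (g2 t) \<le> G"
    and y0: "y 0 = 0" and y10: "norm (y1 0) \<le> Y0"
    and t: "t \<in> {0..tf}"
  shows "norm (y t) \<le> sqrt (2 * C * (exp ((1 + real CARD('m) * real CARD('m) * L * C) * tf) *
                 (Y0^2 / 2 + G^2 / (2 * (1 + real CARD('m) * real CARD('m) * L * C))))) * sqrt eps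
       \<and> norm (y1 t) \<le> sqrt (2 * (exp ((1 + real CARD('m) * real CARD('m) * L * C) * tf) *
                 (Y0^2 / 2 + G^2 / (2 * (1 + real CARD('m) * real CARD('m) * L * C)))))"
proof -
  define \<kappa> where "\<kappa> = real CARD('m) * real CARD('m)"
  have kpos: "\<kappa> \<ge> 0" unfolding \<kappa>_def by simp
  define bb where "bb = 1 + \<kappa> * L * C"
  have bbpos: "bb \<ge> 1" unfolding bb_def using kpos L0 C by simp
  define a where "a = G^2 / 2"
  define K3 where "K3 = exp (bb * tf) * (Y0^2 / 2 + G^2 / (2 * bb))"
  define S where "S = {0..tf}"
  define E where "E s = eps / 2 * (y1 s \<bullet> y1 s) + 1 / 2 * (y s \<bullet> (M s *v y s))" for s
  define D where "D s = eps / 2 * (y1 s \<bullet> y2 s + y2 s \<bullet> y1 s)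
       + 1 / 2 * (y s \<bullet> (M s *v y1 s + M1 s *v y s) + y1 s \<bullet> (M s *v y s))" for s
  have mvn: "norm (A *v v) \<le> \<kappa> * norm A * norm v" for A :: "real^'m^'m" and v
    unfolding \<kappa>_def by (rule mv_norm)
  have qnn: "y s \<bullet> (M s *v y s) \<ge> (1 / C) * norm (y s) ^ 2" for s by (rule coer)
  have Eprops: "E s \<ge> eps / 2 * norm (y1 s) ^ 2" "E s \<ge> 1 / (2 * C) * norm (y s) ^ 2" for s
  proof -
    have a1: "y1 s \<bullet> y1 s = norm (y1 s) ^ 2" by (simp add: power2_norm_eq_inner)
    have a2: "0 \<le> (1 / C) * norm (y s) ^ 2" using C by simp
    have a3: "0 \<le> eps / 2 * norm (y1 s) ^ 2" using eps by simp
    show "E s \<ge> eps / 2 * norm (y1 s) ^ 2" unfolding E_def a1 using qnn[of s] a2 by simp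
    show "E s \<ge> 1 / (2 * C) * norm (y s) ^ 2" unfolding E_def a1 using qnn[of s] a3 by simp
  qed
  have dE: "(E has_real_derivative D s) (at s within S)" if sS: "s \<in> S" for s
  proof -
    have i1: "((\<lambda>x. y1 x \<bullet> y1 x) has_vector_derivative (y1 s \<bullet> y2 s + y2 s \<bullet> y1 s)) (at s within S)"
      using bounded_bilinear.has_vector_derivative[OF bounded_bilinear_inner dy1[OF sS[unfolded S_def]] dy1[OF sS[unfolded S_def]]]
      unfolding S_def .
    have mv: "((\<lambda>x. M x *v y x) has_vector_derivative (M s *v y1 s + M1 s *v y s)) (at s within S)"
      using bounded_bilinear.has_vector_derivative[OF bb_mv dM[OF sS[unfolded S_def]] dy[OF sS[unfolded S_def]]]
      unfolding S_def by simp
    have i2: "((\<lambda>x. y x \<bullet> (M x *v y x)) has_vector_derivative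
        (y s \<bullet> (M s *v y1 s + M1 s *v y s) + y1 s \<bullet> (M s *v y s))) (at s within S)"
      using bounded_bilinear.has_vector_derivative[OF bounded_bilinear_inner dy[OF sS[unfolded S_def]] mv[unfolded S_def]]
      unfolding S_def .
    show ?thesis
      unfolding E_def[abs_def] D_def
      using DERIV_add[OF DERIV_cmult[OF i1[unfolded has_real_derivative_iff_has_vector_derivative[symmetric]]]
                       DERIV_cmult[OF i2[unfolded has_real_derivative_iff_has_vector_derivative[symmetric]]]] .
  qed
  have Dbound: "D s \<le> eps * a + bb * E s" if sS: "s \<in> S" for s
  proof -
    have s': "s \<in> {0..tf}" using sS unfolding S_def .
    have symi: "y s \<bullet> (M s *v y1 s) = y1 s \<bullet> (M s *v y s)"
      using sym_inner[OF sym[of s], of "y s" "y1 s"] by (simp add: inner_commute)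
    have ey2: "eps * (y1 s \<bullet> y2 s) = - (y1 s \<bullet> (M s *v y s)) - eps * (y1 s \<bullet> g2 s)"
    proof -
      have "eps * (y1 s \<bullet> y2 s) = y1 s \<bullet> (eps *\<^sub>R y2 s)" by simp
      also have "\<dots> = - (y1 s \<bullet> (M s *v y s)) - eps * (y1 s \<bullet> g2 s)"
        unfolding eq[OF s'] by (simp add: inner_diff_right)
      finally show ?thesis .
    qed
    have Deq: "D s = - eps * (y1 s \<bullet> g2 s) + 1 / 2 * (y s \<bullet> (M1 s *v y s))"
      unfolding D_def using ey2 symi by (simp add: inner_commute[of "y2 s"] inner_add_right algebra_simps)
    have b1: "- (y1 s \<bullet> g2 s) \<le> norm (y1 s) * G"
    proof -
      have "- (y1 s \<bullet> g2 s) \<le> norm (y1 s) * norm (g2 s)" using Cauchy_Schwarz_ineq2[of "y1 s" "g2 s"] by linarith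
      also have "\<dots> \<le> norm (y1 s) * G" by (rule mult_left_mono[OF bg2[OF s']]) simp
      finally show ?thesis .
    qed
    have b2: "norm (y1 s) * G \<le> (norm (y1 s) ^ 2 + G ^ 2) / 2"
    proof -
      have "0 \<le> (norm (y1 s) - G) ^ 2" by simp
      then show ?thesis by (simp add: power2_eq_square algebra_simps)
    qed
    have b3: "y s \<bullet> (M1 s *v y s) \<le> \<kappa> * L * norm (y s) ^ 2"
    proof -
      have "y s \<bullet> (M1 s *v y s) \<le> norm (y s) * norm (M1 s *v y s)" by (rule norm_cauchy_schwarz)
      also have "\<dots> \<le> norm (y s) * (\<kappa> * norm (M1 s) * norm (y s))" by (rule mult_left_mono[OF mvn]) simp
      also have "\<dots> \<le> norm (y s) * (\<kappa> * L * norm (y s))"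
        by (intro mult_left_mono mult_right_mono bM1[OF s'] kpos) simp_all
      finally show ?thesis by (simp add: power2_eq_square algebra_simps)
    qed
    have "D s \<le> eps * ((norm (y1 s) ^ 2 + G ^ 2) / 2) + 1 / 2 * (\<kappa> * L * norm (y s) ^ 2)"
    proof -
      have "- eps * (y1 s \<bullet> g2 s) \<le> eps * ((norm (y1 s) ^ 2 + G ^ 2) / 2)"
        using mult_left_mono[OF order_trans[OF b1 b2], of eps] eps by simp
      then show ?thesis unfolding Deq using b3 by simp
    qed
    also have "\<dots> = eps * a + eps / 2 * norm (y1 s) ^ 2 + (\<kappa> * L * C) * (1 / (2 * C) * norm (y s) ^ 2)"
      unfolding a_def using C by (simp add: field_simps)
    also have "\<dots> \<le> eps * a + E s + (\<kappa> * L * C) * E s"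
      using Eprops[of s] mult_left_mono[OF Eprops(2)[of s], of "\<kappa> * L * C"] kpos L0 C by simp
    also have "\<dots> = eps * a + bb * E s" unfolding bb_def by (simp add: algebra_simps)
    finally show ?thesis .
  qed
  define W where "W s = exp (- bb * s) * (E s + eps * a / bb)" for s
  define W' where "W' s = exp (- bb * s) * D s + (- bb * exp (- bb * s)) * (E s + eps * a / bb)" for s
  have dW: "(W has_real_derivative W' s) (at s within S)" if sS: "s \<in> S" for s
  proof -
    have de: "((\<lambda>x. exp (- bb * x)) has_real_derivative (- bb * exp (- bb * s))) (at s within S)"
      by (auto intro!: derivative_eq_intros)
    have dE2: "((\<lambda>x. E x + eps * a / bb) has_real_derivative D s) (at s within S)"
      using DERIV_add[OF dE[OF sS] DERIV_const[of "eps * a / bb"]] by simp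
    show ?thesis unfolding W_def[abs_def] W'_def
      using DERIV_mult'[OF de dE2] by (simp add: algebra_simps)
  qed
  have W'neg: "W' s \<le> 0" if "s \<in> S" for s
  proof -
    have "W' s = exp (- bb * s) * (D s - bb * E s - eps * a)"
      unfolding W'_def using bbpos by (simp add: field_simps)
    moreover have "D s - bb * E s - eps * a \<le> 0" using Dbound[OF that] by simp
    ultimately show ?thesis by (simp add: mult_nonneg_nonpos)
  qed
  have Wcont: "continuous_on S W"
    using dW by (meson DERIV_continuous continuous_on_eq_continuous_within)
  have t': "t \<in> S" "0 \<le> t" "t \<le> tf" using t unfolding S_def by auto
  have Wt: "W t \<le> W 0"
  proof (rule DERIV_nonpos_imp_decreasing_open[OF t'(2)])
    fix x assume x: "0 < x" "x < t"
    then have xS: "x \<in> S" using t' unfolding S_def by auto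
    have "at x within S = at x" unfolding S_def using x t' by (intro at_within_Icc_at) auto
    then have "DERIV W x :> W' x" using dW[OF xS] by simp
    then show "\<exists>y. DERIV W x :> y \<and> y \<le> 0" using W'neg[OF xS] by blast
  next
    show "continuous_on {0..t} W" by (rule continuous_on_subset[OF Wcont]) (use t' in \<open>auto simp: S_def\<close>)
  qed
  have E0: "E 0 \<le> eps * (Y0 ^ 2 / 2)"
  proof -
    have "E 0 = eps / 2 * norm (y1 0) ^ 2" unfolding E_def y0 by (simp add: power2_norm_eq_inner)
    also have "\<dots> \<le> eps / 2 * Y0 ^ 2"
      using eps y10 by (intro mult_left_mono power_mono) auto
    finally show ?thesis by simp
  qed
  have Et: "E t \<le> eps * K3"
  proof -
    have "exp (- bb * t) * (E t + eps * a / bb) \<le> E 0 + eps * a / bb" using Wt unfolding W_def by simp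
    then have "E t + eps * a / bb \<le> exp (bb * t) * (E 0 + eps * a / bb)"
      by (simp add: exp_minus field_simps)
    also have "\<dots> \<le> exp (bb * tf) * (eps * (Y0 ^ 2 / 2) + eps * a / bb)"
    proof (rule mult_mono)
      show "exp (bb * t) \<le> exp (bb * tf)" using t' bbpos by simp
      show "E 0 + eps * a / bb \<le> eps * (Y0 ^ 2 / 2) + eps * a / bb" using E0 by simp
      show "0 \<le> exp (bb * tf)" by simp
      show "0 \<le> E 0 + eps * a / bb"
        using Eprops(1)[of 0] eps bbpos unfolding a_def by (smt (verit) divide_nonneg_pos mult_nonneg_nonneg zero_le_power2)
    qed
    also have "\<dots> = eps * K3" unfolding K3_def a_def by (simp add: field_simps)
    finally have "E t + eps * a / bb \<le> eps * K3" .
    moreover have "eps * a / bb \<ge> 0" unfolding a_def using eps bbpos by simp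
    ultimately show ?thesis by linarith
  qed
  have y_b: "norm (y t) \<le> sqrt (2 * C * K3) * sqrt eps"
  proof -
    have "norm (y t) ^ 2 \<le> 2 * C * E t" using Eprops(2)[of t] C by (simp add: field_simps)
    also have "\<dots> \<le> 2 * C * (eps * K3)" using Et C by simp
    finally have "norm (y t) \<le> sqrt (2 * C * (eps * K3))" by (rule real_le_rsqrt)
    then show ?thesis by (simp add: real_sqrt_mult mult_ac)
  qed
  have y1_b: "norm (y1 t) \<le> sqrt (2 * K3)"
  proof -
    have "eps * norm (y1 t) ^ 2 \<le> eps * (2 * K3)" using Eprops(1)[of t] Et by simp
    then have "norm (y1 t) ^ 2 \<le> 2 * K3" using eps by simp
    then show ?thesis by (rule real_le_rsqrt)
  qed
  show ?thesis using y_b y1_b unfolding K3_def bb_def \<kappa>_def by simp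
qed

theorem lemma3p2:
  fixes F :: "real^'d \<Rightarrow> real^'d"
    and A :: "real^'d \<Rightarrow> real^'m^'m"
    and b :: "real^'d \<Rightarrow> real^'m"
    and tf C :: real
    and r r1 r2 r3 :: "real \<Rightarrow> real \<Rightarrow> real^'d"
    and x x1 x2 x3 :: "real \<Rightarrow> real \<Rightarrow> real^'m"
  assumes tf_pos: "tf > 0"
    and C_pos: "C > 0"
    and F_C2: "Ck 2 F"
    and A_C3: "Ck 3 A"
    and b_C3: "Ck 3 b"
    and A_sym: "\<And>\<rho>. transpose (A \<rho>) = A \<rho>"
    and A_coercive: "\<And>\<rho> v. v \<bullet> (A \<rho> *v v) \<ge> (1 / C) * norm v ^ 2"
    (* r(eps,.) and x(eps,.) are C^3 on [0,tf], with derivatives r1,r2,r3 and x1,x2,x3 *)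
    and r_d1: "\<And>eps t. eps > 0 \<Longrightarrow> t \<in> {0..tf} \<Longrightarrow>
        (r eps has_vector_derivative r1 eps t) (at t within {0..tf})"
    and r_d2: "\<And>eps t. eps > 0 \<Longrightarrow> t \<in> {0..tf} \<Longrightarrow>
        (r1 eps has_vector_derivative r2 eps t) (at t within {0..tf})"
    and r_d3: "\<And>eps t. eps > 0 \<Longrightarrow> t \<in> {0..tf} \<Longrightarrow>
        (r2 eps has_vector_derivative r3 eps t) (at t within {0..tf})"
    and r3_cont: "\<And>eps. eps > 0 \<Longrightarrow> continuous_on {0..tf} (r3 eps)"
    and x_d1: "\<And>eps t. eps > 0 \<Longrightarrow> t \<in> {0..tf} \<Longrightarrow>
        (x eps has_vector_derivative x1 eps t) (at t within {0..tf})"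
    and x_d2: "\<And>eps t. eps > 0 \<Longrightarrow> t \<in> {0..tf} \<Longrightarrow>
        (x1 eps has_vector_derivative x2 eps t) (at t within {0..tf})"
    and x_d3: "\<And>eps t. eps > 0 \<Longrightarrow> t \<in> {0..tf} \<Longrightarrow>
        (x2 eps has_vector_derivative x3 eps t) (at t within {0..tf})"
    and x3_cont: "\<And>eps. eps > 0 \<Longrightarrow> continuous_on {0..tf} (x3 eps)"
    (* the XLMD system *)
    and ode_r: "\<And>eps t. eps > 0 \<Longrightarrow> t \<in> {0..tf} \<Longrightarrow>
        r2 eps t = F (r eps t) - gradQ_r A b (r eps t) (x eps t)"
    and ode_x: "\<And>eps t. eps > 0 \<Longrightarrow> t \<in> {0..tf} \<Longrightarrow>
        eps *\<^sub>R x2 eps t = b (r eps t) - A (r eps t) *v x eps t"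
    (* uniform bounds *)
    and bnd: "\<And>eps t. eps > 0 \<Longrightarrow> t \<in> {0..tf} \<Longrightarrow>
        norm (r eps t) \<le> C \<and> norm (r1 eps t) \<le> C \<and> norm (r2 eps t) \<le> C \<and>
        norm (x eps t) \<le> C \<and> sqrt eps * norm (x1 eps t) \<le> C"
    (* compatible initial conditions *)
    and init_x: "\<And>eps. eps > 0 \<Longrightarrow>
        x eps 0 = matrix_inv (A (r eps 0)) *v b (r eps 0)"
    and init_bnd: "\<And>eps. eps > 0 \<Longrightarrow>
        norm (x1 eps 0) \<le> C \<and> norm (r eps 0) \<le> C \<and> norm (r1 eps 0) \<le> C"
  shows "\<exists>K. \<forall>eps>0. \<forall>t\<in>{0..tf}.
     (let y = (\<lambda>s. x eps s - matrix_inv (A (r eps s)) *v b (r eps s)) in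
        norm (y t) \<le> K * sqrt eps \<and>
        norm (vector_derivative y (at t within {0..tf})) \<le> K)"
proof -
  have A2: "Ck 2 A" using Ck_Suc_mono[of 2 A] A_C3 by (simp only: numeral_3_eq_3 numeral_2_eq_2)
  have b2: "Ck 2 b" using Ck_Suc_mono[of 2 b] b_C3 by (simp only: numeral_3_eq_3 numeral_2_eq_2)
  obtain KA where KA0: "KA > 0" and HA: "\<And>r r1 r2 S t. (\<And>s. s \<in> S \<Longrightarrow> (r has_vector_derivative r1 s) (at s within S)) \<Longrightarrow>
      (\<And>s. s \<in> S \<Longrightarrow> (r1 has_vector_derivative r2 s) (at s within S)) \<Longrightarrow>
      (\<And>s. s \<in> S \<Longrightarrow> norm (r s) \<le> C \<and> norm (r1 s) \<le> C \<and> norm (r2 s) \<le> C) \<Longrightarrow> t \<in> S \<Longrightarrow>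
     ((\<lambda>s. A (r s)) has_vector_derivative cd1 A r r1 t) (at t within S) \<and>
     (cd1 A r r1 has_vector_derivative cd2 A r r1 r2 t) (at t within S) \<and>
     norm (A (r t)) \<le> KA \<and> norm (cd1 A r r1 t) \<le> KA \<and> norm (cd2 A r r1 r2 t) \<le> KA"
    using curve2[OF A2 C_pos] by blast
  obtain KB where KB0: "KB > 0" and HB: "\<And>r r1 r2 S t. (\<And>s. s \<in> S \<Longrightarrow> (r has_vector_derivative r1 s) (at s within S)) \<Longrightarrow>
      (\<And>s. s \<in> S \<Longrightarrow> (r1 has_vector_derivative r2 s) (at s within S)) \<Longrightarrow>
      (\<And>s. s \<in> S \<Longrightarrow> norm (r s) \<le> C \<and> norm (r1 s) \<le> C \<and> norm (r2 s) \<le> C) \<Longrightarrow> t \<in> S \<Longrightarrow>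
     ((\<lambda>s. b (r s)) has_vector_derivative cd1 b r r1 t) (at t within S) \<and>
     (cd1 b r r1 has_vector_derivative cd2 b r r1 r2 t) (at t within S) \<and>
     norm (b (r t)) \<le> KB \<and> norm (cd1 b r r1 t) \<le> KB \<and> norm (cd2 b r r1 r2 t) \<le> KB"
    using curve2[OF b2 C_pos] by blast
  define \<kappa> where "\<kappa> = real CARD('m) * real CARD('m)"
  have kpos: "\<kappa> \<ge> 0" unfolding \<kappa>_def by simp
  have mvn: "norm (Z *v v) \<le> \<kappa> * norm Z * norm v" for Z :: "real^'m^'m" and v
    unfolding \<kappa>_def by (rule mv_norm)
  define G0 where "G0 = C * KB"
  define G1 where "G1 = C * (KB + \<kappa> * KA * G0)"
  define G2 where "G2 = C * (KB + \<kappa> * KA * G1 + \<kappa> * KA * G0 + \<kappa> * KA * G1)"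
  define Y0 where "Y0 = C + G1"
  define K3 where "K3 = exp ((1 + real CARD('m) * real CARD('m) * KA * C) * tf) *
                 (Y0^2 / 2 + G2^2 / (2 * (1 + real CARD('m) * real CARD('m) * KA * C)))"
  define K where "K = max (sqrt (2 * C * K3)) (sqrt (2 * K3))"
  have coerC: "\<And>\<rho> v. v \<bullet> (A \<rho> *v v) \<ge> (1 / C) * norm v ^ 2" by (rule A_coercive)
  have c0: "1 / C > 0" using C_pos by simp
  have invb: "norm (matrix_inv (A \<rho>) *v w) \<le> C * norm w" for \<rho> w
    using inv_props(4)[OF c0 coerC, of \<rho> w] by (simp add: mult.commute)
  have AAinv: "A \<rho> *v (matrix_inv (A \<rho>) *v w) = w" for \<rho> w
    using inv_props(1)[OF c0 coerC, of \<rho>] by (simp add: matrix_vector_mul_assoc)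
  have key: "norm (x eps t - matrix_inv (A (r eps t)) *v b (r eps t)) \<le> K * sqrt eps \<and>
     norm (vector_derivative (\<lambda>s. x eps s - matrix_inv (A (r eps s)) *v b (r eps s)) (at t within {0..tf})) \<le> K"
    if eps: "eps > 0" and t: "t \<in> {0..tf}" for eps t
  proof -
    define S where "S = {0..tf::real}"
    define R where "R = r eps"
    define R1 where "R1 = r1 eps"
    define R2 where "R2 = r2 eps"
    define M where "M s = A (R s)" for s
    define M1 where "M1 = cd1 A R R1"
    define M2 where "M2 = cd2 A R R1 R2"
    define \<beta> where "\<beta> s = b (R s)" for s
    define \<beta>1 where "\<beta>1 = cd1 b R R1"
    define \<beta>2 where "\<beta>2 = cd2 b R R1 R2"
    define g where "g s = matrix_inv (M s) *v \<beta> s" for s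
    define g1 where "g1 s = matrix_inv (M s) *v (\<beta>1 s - M1 s *v g s)" for s
    define g2 where "g2 s = matrix_inv (M s) *v ((\<beta>2 s - (M1 s *v g1 s + M2 s *v g s)) - M1 s *v g1 s)" for s
    have rd1: "\<And>s. s \<in> S \<Longrightarrow> (R has_vector_derivative R1 s) (at s within S)"
      unfolding R_def R1_def S_def using r_d1[OF eps] .
    have rd2: "\<And>s. s \<in> S \<Longrightarrow> (R1 has_vector_derivative R2 s) (at s within S)"
      unfolding R1_def R2_def S_def using r_d2[OF eps] .
    have rb: "\<And>s. s \<in> S \<Longrightarrow> norm (R s) \<le> C \<and> norm (R1 s) \<le> C \<and> norm (R2 s) \<le> C"
      unfolding R_def R1_def R2_def S_def using bnd[OF eps] by blast
    have HA': "(M has_vector_derivative M1 s) (at s within S) \<and> (M1 has_vector_derivative M2 s) (at s within S) \<and>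
        norm (M s) \<le> KA \<and> norm (M1 s) \<le> KA \<and> norm (M2 s) \<le> KA" if "s \<in> S" for s
      unfolding M_def[abs_def] M1_def M2_def using HA[OF rd1 rd2 rb that] by simp
    have HB': "(\<beta> has_vector_derivative \<beta>1 s) (at s within S) \<and> (\<beta>1 has_vector_derivative \<beta>2 s) (at s within S) \<and>
        norm (\<beta> s) \<le> KB \<and> norm (\<beta>1 s) \<le> KB \<and> norm (\<beta>2 s) \<le> KB" if "s \<in> S" for s
      unfolding \<beta>_def[abs_def] \<beta>1_def \<beta>2_def using HB[OF rd1 rd2 rb that] by simp
    have coerM: "\<And>s v. s \<in> S \<Longrightarrow> v \<bullet> (M s *v v) \<ge> (1 / C) * norm v ^ 2"
      unfolding M_def by (rule A_coercive)
    have dg: "(g has_vector_derivative g1 s) (at s within S)" if sS: "s \<in> S" for s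
      using inv_deriv[OF c0 coerM sS conjunct1[OF HA'[OF sS]] conjunct1[OF HB'[OF sS]]]
      unfolding g_def[abs_def] g1_def by simp
    have dg1: "(g1 has_vector_derivative g2 s) (at s within S)" if sS: "s \<in> S" for s
    proof -
      have d1: "((\<lambda>s. M1 s *v g s) has_vector_derivative (M1 s *v g1 s + M2 s *v g s)) (at s within S)"
        using bounded_bilinear.has_vector_derivative[OF bb_mv conjunct1[OF conjunct2[OF HA'[OF sS]]] dg[OF sS]]
        by simp
      have d2: "((\<lambda>s. \<beta>1 s - M1 s *v g s) has_vector_derivative (\<beta>2 s - (M1 s *v g1 s + M2 s *v g s))) (at s within S)"
        by (rule has_vector_derivative_diff[OF conjunct1[OF conjunct2[OF HB'[OF sS]]] d1])
      show ?thesis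
        using inv_deriv[OF c0 coerM sS conjunct1[OF HA'[OF sS]] d2]
        unfolding g1_def[abs_def] g2_def by (simp add: g1_def[symmetric])
    qed
    have gb: "norm (g s) \<le> G0" if sS: "s \<in> S" for s
    proof -
      have "norm (g s) \<le> C * norm (\<beta> s)" unfolding g_def M_def by (rule invb)
      also have "\<dots> \<le> C * KB" using HB'[OF sS] C_pos by (simp add: mult_left_mono)
      finally show ?thesis unfolding G0_def .
    qed
    have mvb: "norm (Z *v v) \<le> \<kappa> * KA * G" if "norm Z \<le> KA" "norm v \<le> G" for Z :: "real^'m^'m" and v G
    proof -
      have "norm (Z *v v) \<le> \<kappa> * norm Z * norm v" by (rule mvn)
      also have "\<dots> \<le> \<kappa> * KA * G"
        using that kpos KA0 by (intro mult_mono mult_left_mono) auto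
      finally show ?thesis .
    qed
    have g1b: "norm (g1 s) \<le> G1" if sS: "s \<in> S" for s
    proof -
      have "norm (g1 s) \<le> C * norm (\<beta>1 s - M1 s *v g s)" unfolding g1_def M_def by (rule invb)
      also have "\<dots> \<le> C * (KB + \<kappa> * KA * G0)"
      proof (rule mult_left_mono)
        show "norm (\<beta>1 s - M1 s *v g s) \<le> KB + \<kappa> * KA * G0"
          using norm_triangle_ineq4[of "\<beta>1 s" "M1 s *v g s"] HB'[OF sS] mvb[of "M1 s" "g s" G0] HA'[OF sS] gb[OF sS]
          by linarith
      qed (use C_pos in simp)
      finally show ?thesis unfolding G1_def .
    qed
    have g2b: "norm (g2 s) \<le> G2" if sS: "s \<in> S" for s
    proof -
      have "norm (g2 s) \<le> C * norm ((\<beta>2 s - (M1 s *v g1 s + M2 s *v g s)) - M1 s *v g1 s)" unfolding g2_def M_def by (rule invb)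
      also have "\<dots> \<le> C * (KB + \<kappa> * KA * G1 + \<kappa> * KA * G0 + \<kappa> * KA * G1)"
      proof (rule mult_left_mono)
        have u1: "norm (M1 s *v g1 s) \<le> \<kappa> * KA * G1" using mvb HA'[OF sS] g1b[OF sS] by blast
        have u2: "norm (M2 s *v g s) \<le> \<kappa> * KA * G0" using mvb HA'[OF sS] gb[OF sS] by blast
        show "norm ((\<beta>2 s - (M1 s *v g1 s + M2 s *v g s)) - M1 s *v g1 s) \<le> KB + \<kappa> * KA * G1 + \<kappa> * KA * G0 + \<kappa> * KA * G1"
          using norm_triangle_ineq4[of "\<beta>2 s - (M1 s *v g1 s + M2 s *v g s)" "M1 s *v g1 s"]
            norm_triangle_ineq4[of "\<beta>2 s" "M1 s *v g1 s + M2 s *v g s"]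
            norm_triangle_ineq[of "M1 s *v g1 s" "M2 s *v g s"] HB'[OF sS] u1 u2
          by linarith
      qed (use C_pos in simp)
      finally show ?thesis unfolding G2_def .
    qed
    define y where "y s = x eps s - g s" for s
    define y1 where "y1 s = x1 eps s - g1 s" for s
    define y2 where "y2 s = x2 eps s - g2 s" for s
    have tf0: "0 \<in> S" unfolding S_def using tf_pos by simp
    have dy: "\<And>s. s \<in> {0..tf} \<Longrightarrow> (y has_vector_derivative y1 s) (at s within {0..tf})"
      unfolding y_def[abs_def] y1_def using x_d1[OF eps] dg unfolding S_def
      by (intro has_vector_derivative_diff) auto
    have dy1: "\<And>s. s \<in> {0..tf} \<Longrightarrow> (y1 has_vector_derivative y2 s) (at s within {0..tf})"
      unfolding y1_def[abs_def] y2_def using x_d2[OF eps] dg1 unfolding S_def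
      by (intro has_vector_derivative_diff) auto
    have dM: "\<And>s. s \<in> {0..tf} \<Longrightarrow> (M has_vector_derivative M1 s) (at s within {0..tf})"
      using HA' unfolding S_def by blast
    have eqy: "eps *\<^sub>R y2 s = - (M s *v y s) - eps *\<^sub>R g2 s" if s: "s \<in> {0..tf}" for s
    proof -
      have Mg: "M s *v g s = \<beta> s" unfolding g_def M_def by (rule AAinv)
      have "eps *\<^sub>R y2 s = eps *\<^sub>R x2 eps s - eps *\<^sub>R g2 s" unfolding y2_def by (simp add: scaleR_diff_right)
      also have "\<dots> = \<beta> s - M s *v x eps s - eps *\<^sub>R g2 s"
        unfolding ode_x[OF eps s] \<beta>_def M_def R_def by simp
      also have "\<dots> = - (M s *v y s) - eps *\<^sub>R g2 s"
        unfolding y_def Mg[symmetric] by (simp add: matrix_vector_mult_diff_distrib)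
      finally show ?thesis .
    qed
    have y0: "y 0 = 0"
      unfolding y_def g_def M_def \<beta>_def R_def using init_x[OF eps] by simp
    have y10: "norm (y1 0) \<le> Y0"
      unfolding y1_def Y0_def using norm_triangle_ineq4[of "x1 eps 0" "g1 0"] init_bnd[OF eps] g1b[OF tf0]
      by linarith
    have M1b: "\<And>s. s \<in> {0..tf} \<Longrightarrow> norm (M1 s) \<le> KA" using HA' unfolding S_def by blast
    have g2b': "\<And>s. s \<in> {0..tf} \<Longrightarrow> norm (g2 s) \<le> G2" using g2b unfolding S_def by blast
    have symM: "\<And>s. transpose (M s) = M s" unfolding M_def by (rule A_sym)
    have coerM': "\<And>s v. v \<bullet> (M s *v v) \<ge> (1 / C) * norm v ^ 2" unfolding M_def by (rule A_coercive)
    note en = energy[OF tf_pos eps C_pos less_imp_le[OF KA0] dM dy dy1 symM coerM' eqy M1b g2b' y0 y10 t]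
    have en1: "norm (y t) \<le> sqrt (2 * C * K3) * sqrt eps" and en2: "norm (y1 t) \<le> sqrt (2 * K3)"
      using en unfolding K3_def by auto
    have yeq: "y = (\<lambda>s. x eps s - matrix_inv (A (r eps s)) *v b (r eps s))"
      unfolding y_def[abs_def] g_def M_def \<beta>_def R_def by simp
    have vd: "vector_derivative y (at t within {0..tf}) = y1 t"
      using vector_derivative_within_cbox[OF tf_pos, of t y "y1 t"] dy[OF t] t by (simp add: cbox_interval)
    have "sqrt (2 * C * K3) * sqrt eps \<le> K * sqrt eps" unfolding K_def by (rule mult_right_mono) (use eps in auto)
    moreover have "sqrt (2 * K3) \<le> K" unfolding K_def by simp
    moreover have "norm (x eps t - matrix_inv (A (r eps t)) *v b (r eps t)) = norm (y t)"
      by (simp add: y_def g_def M_def \<beta>_def R_def)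
    moreover have "vector_derivative (\<lambda>s. x eps s - matrix_inv (A (r eps s)) *v b (r eps s)) (at t within {0..tf}) = y1 t"
      using vd yeq by simp
    ultimately show ?thesis using en1 en2 by simp
  qed
  show ?thesis
    by (rule exI[of _ K]) (simp add: Let_def key)
qed

end
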